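(* Let $\kappa\le\lambda<0$ and nonnegative progress values be given, and consider the sequential game $(A^{s},B^{s})$ and the cooperative game $(A^{c},B^{c})$ defined in the context. Suppose that $\max_{i\in\Gamma^1}a^{s}_i>\kappa$ and that there exists $j\in\Gamma^2$ with $b_{i',j}>\lambda$ for every $i'\in\arg\max_{i\in\Gamma^1}a^{s}_i$. Let $\Pi_{s}$ be the set of pairs $(i,j)$ with $i\in\arg\max_{i'\in\Gamma^1}a^{s}_{i'}$ and $j\in\arg\max_{j'\in\Gamma^2}b_{i,j'}$ (equivalently, the set of Nash, and also of Stackelberg, equilibria of the sequential game); let $\Pi_{st}$ be the set of Stackelberg equilibria (P1 leader) of the cooperative game; let $\Pi_{n}$ be the set of Nash equilibria of the cooperative game; and let $\Pi_{n,RoR}$ be the set of those Nash equilibria of the cooperative game that maximize P1's payoff $a^{c}_{i,j}$ among all Nash equilibria of the cooperative game. Then $$\emptyset\neq\Pi_{s}=\Pi_{st}=\Pi_{n,RoR}\subseteq\Pi_{n},$$ and every pair in $\Pi_s$ is feasible.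
   Context: Abstract two-player racing set-up. Player 1 (P1, the leader) chooses a trajectory $i\in\Gamma^1=\{1,\dots,n\}$, player 2 (P2) chooses $j\in\Gamma^2=\{1,\dots,m\}$. Each trajectory has a progress value $P^1_i\ge 0$ (resp. $P^2_j\ge 0$). Each trajectory is either on track or off track, and each pair $(i,j)$ either collides or not. A pair $(i,j)$ is feasible if $i$ and $j$ are both on track and $(i,j)$ does not collide. Constants $\kappa\le\lambda<0$ are fixed. Sequential game: P1's payoff does not depend on $j$: $a^{s}_{i,j}=a^{s}_i=\kappa$ if $i$ is off track, and $a^{s}_i=P^1_i$ otherwise. P2's payoff: $b_{i,j}=\kappa$ if $j$ is off track; otherwise $b_{i,j}=\lambda$ if $(i,j)$ collides; otherwise $b_{i,j}=P^2_j$. Cooperative game: $a^{c}_{i,j}=\kappa$ if $i$ is off track; otherwise $\lambda$ if $(i,j)$ collides; otherwise $P^1_i$. P2's payoff is the same $b_{i,j}$ as in the sequential game. For a bimatrix game $(A,B)$: $R(i)=\arg\max_{j\in\Gamma^2}b_{i,j}$; $(i^*,j^* )$ is a Stackelberg equilibrium with P1 as leader if $i^*\in\arg\max_{i}\min_{j\in R(i)}a_{i,j}$ and $j^*\in R(i^* )$; $(i^*,j^* )$ is a Nash equilibrium if $a_{i^*,j^*}\ge a_{i,j^*}$ for all $i$ and $b_{i^*,j^*}\ge b_{i^*,j}$ for all $j$. Only pure strategies are considered. *)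

theory Defs
  imports Complex_Main
begin

definition argmax_on :: "'a set \<Rightarrow> ('a \<Rightarrow> real) \<Rightarrow> 'a set" where
  "argmax_on S f = {x \<in> S. \<forall>y \<in> S. f y \<le> f x}"

definition best_resp :: "nat set \<Rightarrow> (nat \<Rightarrow> nat \<Rightarrow> real) \<Rightarrow> nat \<Rightarrow> nat set" where
  "best_resp G2 b i = argmax_on G2 (\<lambda>j. b i j)"

text \<open>Stackelberg equilibria with P1 as leader (pessimistic: min over R(i)).\<close>
definition stackelberg_eq ::
  "nat set \<Rightarrow> nat set \<Rightarrow> (nat \<Rightarrow> nat \<Rightarrow> real) \<Rightarrow> (nat \<Rightarrow> nat \<Rightarrow> real) \<Rightarrow> (nat \<times> nat) set" where
  "stackelberg_eq G1 G2 a b =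
     {(i, j). i \<in> argmax_on G1 (\<lambda>i'. Min ((\<lambda>j'. a i' j') ` best_resp G2 b i'))
              \<and> j \<in> best_resp G2 b i}"

definition nash_eq ::
  "nat set \<Rightarrow> nat set \<Rightarrow> (nat \<Rightarrow> nat \<Rightarrow> real) \<Rightarrow> (nat \<Rightarrow> nat \<Rightarrow> real) \<Rightarrow> (nat \<times> nat) set" where
  "nash_eq G1 G2 a b =
     {(i, j). i \<in> G1 \<and> j \<in> G2 \<and> (\<forall>i' \<in> G1. a i' j \<le> a i j) \<and> (\<forall>j' \<in> G2. b i j' \<le> b i j)}"

definition nash_RoR ::
  "nat set \<Rightarrow> nat set \<Rightarrow> (nat \<Rightarrow> nat \<Rightarrow> real) \<Rightarrow> (nat \<Rightarrow> nat \<Rightarrow> real) \<Rightarrow> (nat \<times> nat) set" where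
  "nash_RoR G1 G2 a b =
     {(i, j) \<in> nash_eq G1 G2 a b. \<forall>(i', j') \<in> nash_eq G1 G2 a b. a i' j' \<le> a i j}"

text \<open>The racing games. on1 i / on2 j: trajectory is on track; coll i j: pair collides.\<close>

definition a_seq :: "real \<Rightarrow> (nat \<Rightarrow> real) \<Rightarrow> (nat \<Rightarrow> bool) \<Rightarrow> nat \<Rightarrow> real" where
  "a_seq \<kappa> P1 on1 i = (if \<not> on1 i then \<kappa> else P1 i)"

definition a_coop :: "real \<Rightarrow> real \<Rightarrow> (nat \<Rightarrow> real) \<Rightarrow> (nat \<Rightarrow> bool) \<Rightarrow> (nat \<Rightarrow> nat \<Rightarrow> bool)
    \<Rightarrow> nat \<Rightarrow> nat \<Rightarrow> real" where
  "a_coop \<kappa> lam P1 on1 coll i j =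
     (if \<not> on1 i then \<kappa> else if coll i j then lam else P1 i)"

definition b_pay :: "real \<Rightarrow> real \<Rightarrow> (nat \<Rightarrow> real) \<Rightarrow> (nat \<Rightarrow> bool) \<Rightarrow> (nat \<Rightarrow> nat \<Rightarrow> bool)
    \<Rightarrow> nat \<Rightarrow> nat \<Rightarrow> real" where
  "b_pay \<kappa> lam P2 on2 coll i j =
     (if \<not> on2 j then \<kappa> else if coll i j then lam else P2 j)"

definition feasible :: "(nat \<Rightarrow> bool) \<Rightarrow> (nat \<Rightarrow> bool) \<Rightarrow> (nat \<Rightarrow> nat \<Rightarrow> bool) \<Rightarrow> nat \<Rightarrow> nat \<Rightarrow> bool" where
  "feasible on1 on2 coll i j \<longleftrightarrow> on1 i \<and> on2 j \<and> \<not> coll i j"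

end

theory Submission
  imports Defs
begin

lemma argmax_nonempty:
  assumes "finite S" "S \<noteq> {}"
  shows "argmax_on S f \<noteq> {}"
proof -
  have "Max (f ` S) \<in> f ` S" using Max_in[of "f ` S"] assms by auto
  then obtain x where "x \<in> S" "f x = Max (f ` S)" by auto
  moreover have "\<forall>y\<in>S. f y \<le> f x" using assms calculation by auto
  ultimately show ?thesis unfolding argmax_on_def by auto
qed

theorem theorem1:
  fixes n m :: nat and \<kappa> lam :: real
    and P1 P2 :: "nat \<Rightarrow> real"
    and on1 on2 :: "nat \<Rightarrow> bool" and coll :: "nat \<Rightarrow> nat \<Rightarrow> bool"
  defines "as \<equiv> a_seq \<kappa> P1 on1"
    and "ac \<equiv> a_coop \<kappa> lam P1 on1 coll"
    and "b \<equiv> b_pay \<kappa> lam P2 on2 coll"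
  defines "\<Pi>s \<equiv> {(i, j). i \<in> argmax_on {1..n} as \<and> j \<in> argmax_on {1..m} (\<lambda>j'. b i j')}"
    and "\<Pi>st \<equiv> stackelberg_eq {1..n} {1..m} ac b"
    and "\<Pi>n \<equiv> nash_eq {1..n} {1..m} ac b"
    and "\<Pi>nRoR \<equiv> nash_RoR {1..n} {1..m} ac b"
  assumes "n \<ge> 1" and "m \<ge> 1"
    and "\<kappa> \<le> lam" and "lam < 0"
    and "\<forall>i \<in> {1..n}. P1 i \<ge> 0" and "\<forall>j \<in> {1..m}. P2 j \<ge> 0"
    and "Max (as ` {1..n}) > \<kappa>"
    and "\<exists>j \<in> {1..m}. \<forall>i' \<in> argmax_on {1..n} as. b i' j > lam"
  shows "\<Pi>s \<noteq> {} \<and> \<Pi>s = \<Pi>st \<and> \<Pi>st = \<Pi>nRoR \<and> \<Pi>nRoR \<subseteq> \<Pi>n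
         \<and> (\<forall>(i, j) \<in> \<Pi>s. feasible on1 on2 coll i j)"
proof -
  define M where "M = Max (as ` {1..n})"
  define R where "R i = argmax_on {1..m} (\<lambda>j'. b i j')" for i
  have ne1: "{1..n} \<noteq> {}" and ne2: "{1..m} \<noteq> {}" using assms(8,9) by auto
  have "M \<in> as ` {1..n}" using Max_in[of "as ` {1..n}"] ne1 unfolding M_def by auto
  then obtain i0 where i0: "i0 \<in> {1..n}" "as i0 = M" by auto
  have leM: "as i \<le> M" if "i \<in> {1..n}" for i
    unfolding M_def using that by auto
  have Mk: "M > \<kappa>" using assms(14) M_def by simp
  have I: "i \<in> argmax_on {1..n} as \<longleftrightarrow> i \<in> {1..n} \<and> as i = M" for i
    unfolding argmax_on_def using leM i0 by force
  have on_of: "on1 i \<and> P1 i = M" if "as i = M" for i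
    using that Mk unfolding as_def a_seq_def by (auto split: if_splits)
  have M0: "M \<ge> 0" using on_of[OF i0(2)] i0 assms(12) by (metis)
  have acle: "ac i j \<le> M" if "i \<in> {1..n}" for i j
    using leM[OF that] M0 assms(10,11) unfolding ac_def a_coop_def as_def a_seq_def
    by (auto split: if_splits)
  obtain j0 where j0: "j0 \<in> {1..m}" "\<forall>i' \<in> argmax_on {1..n} as. b i' j0 > lam"
    using assms(15) by auto
  have Rne: "R i \<noteq> {}" for i unfolding R_def using argmax_nonempty[OF _ ne2] by blast
  have Rsub: "R i \<subseteq> {1..m}" for i unfolding R_def argmax_on_def by auto
  have goodR: "on2 j \<and> \<not> coll i j" if "i \<in> argmax_on {1..n} as" "j \<in> R i" for i j
  proof -
    have "b i j \<ge> b i j0" using that(2) j0(1) unfolding R_def argmax_on_def by auto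
    then have "b i j > lam" using j0(2) that(1) by force
    then show ?thesis using assms(10) unfolding b_def b_pay_def by (auto split: if_splits)
  qed
  have acM: "ac i j = M" if "i \<in> argmax_on {1..n} as" "j \<in> R i" for i j
    using goodR[OF that] on_of I that(1) unfolding ac_def a_coop_def by auto
  have lt: "ac i j < M" if "i \<in> {1..n}" "i \<notin> argmax_on {1..n} as" for i j
  proof -
    have "as i < M" using leM[OF that(1)] I that by auto
    then show ?thesis using Mk M0 assms(11) unfolding ac_def a_coop_def as_def a_seq_def
      by (auto split: if_splits)
  qed
  have sEq: "\<Pi>s = {(i,j). i \<in> argmax_on {1..n} as \<and> j \<in> R i}"
    unfolding \<Pi>s_def R_def by simp
  have "argmax_on {1..n} as \<noteq> {}" using I i0 by auto
  then obtain i1 where i1: "i1 \<in> argmax_on {1..n} as" by auto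
  obtain j1 where "j1 \<in> R i1" using Rne by blast
  with i1 have ne: "\<Pi>s \<noteq> {}" unfolding sEq by auto
  define v where "v i = Min ((\<lambda>j'. ac i j') ` R i)" for i
  have finR: "finite (R i)" for i using Rsub finite_subset by blast
  have vM: "v i = M" if "i \<in> argmax_on {1..n} as" for i
  proof -
    have "(\<lambda>j'. ac i j') ` R i = {M}" using acM[OF that] Rne[of i] by auto
    then show ?thesis unfolding v_def by simp
  qed
  have vlt: "v i < M" if "i \<in> {1..n}" "i \<notin> argmax_on {1..n} as" for i
  proof -
    obtain j where j: "j \<in> R i" using Rne by blast
    have "v i \<le> ac i j" unfolding v_def using finR j by auto
    then show ?thesis using lt[OF that, of j] by linarith
  qed
  have vI: "argmax_on {1..n} v = argmax_on {1..n} as"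
  proof -
    have "i \<in> argmax_on {1..n} v \<longleftrightarrow> i \<in> argmax_on {1..n} as" for i
    proof
      assume h: "i \<in> argmax_on {1..n} v"
      then have "v i1 \<le> v i" "i \<in> {1..n}" unfolding argmax_on_def using i1 I by auto
      then show "i \<in> argmax_on {1..n} as" using vM[OF i1] vlt by force
    next
      assume h: "i \<in> argmax_on {1..n} as"
      have "\<forall>y\<in>{1..n}. v y \<le> v i"
        using vM[OF h] vM vlt by (metis less_eq_real_def)
      then show "i \<in> argmax_on {1..n} v" using h I unfolding argmax_on_def by auto
    qed
    then show ?thesis by blast
  qed
  have st: "\<Pi>s = \<Pi>st"
    unfolding sEq \<Pi>st_def stackelberg_eq_def best_resp_def R_def[symmetric]
    using vI unfolding v_def by simp
  have sn: "\<Pi>s \<subseteq> \<Pi>n"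
  proof
    fix p assume "p \<in> \<Pi>s"
    then obtain i j where p: "p = (i,j)" "i \<in> argmax_on {1..n} as" "j \<in> R i"
      unfolding sEq by auto
    then show "p \<in> \<Pi>n" unfolding \<Pi>n_def nash_eq_def
      using acM[OF p(2,3)] acle Rsub I unfolding R_def argmax_on_def by auto
  qed
  have ror: "\<Pi>s = \<Pi>nRoR"
  proof
    show "\<Pi>s \<subseteq> \<Pi>nRoR"
    proof
      fix p assume h: "p \<in> \<Pi>s"
      then obtain i j where p: "p = (i,j)" "i \<in> argmax_on {1..n} as" "j \<in> R i"
        unfolding sEq by auto
      show "p \<in> \<Pi>nRoR" unfolding \<Pi>nRoR_def nash_RoR_def
        using sn h \<Pi>n_def acM[OF p(2,3)] acle p(1) unfolding nash_eq_def by auto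
    qed
  next
    show "\<Pi>nRoR \<subseteq> \<Pi>s"
    proof
      fix p assume h: "p \<in> \<Pi>nRoR"
      then obtain i j where p: "p = (i,j)" "(i,j) \<in> \<Pi>n"
        "\<forall>(i', j') \<in> \<Pi>n. ac i' j' \<le> ac i j"
        unfolding \<Pi>nRoR_def nash_RoR_def \<Pi>n_def by auto
      have "(i1, j1) \<in> \<Pi>n" using sn \<open>j1 \<in> R i1\<close> i1 unfolding sEq by auto
      then have "ac i j \<ge> M" using p(3) acM[OF i1 \<open>j1 \<in> R i1\<close>] by auto
      moreover have ii: "i \<in> {1..n}" "j \<in> R i"
        using p(2) unfolding \<Pi>n_def nash_eq_def R_def argmax_on_def by auto
      ultimately have "i \<in> argmax_on {1..n} as" using lt[of i j] by linarith
      then show "p \<in> \<Pi>s" using ii p(1) unfolding sEq by auto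
    qed
  qed
  have feas: "\<forall>(i, j) \<in> \<Pi>s. feasible on1 on2 coll i j"
    unfolding sEq feasible_def using goodR on_of I by auto
  show ?thesis using ne st ror sn feas by auto
qed

end
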